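(* For every $n\ge 12$, there is an assignment $x:V\to\{-1,1\}$ with $x_{-\mathbf v}=-x_{\mathbf v}$ for all $\mathbf v\in V$ that satisfies clauses of $\Phi_n$ of total weight at least $\frac{3(\sqrt{21}-4)}{2}$.
   Context: Let $\mathbf e_1,\dots,\mathbf e_n$ be the standard basis of $\mathbb R^n$ and $V=\{\frac{1}{\sqrt3}(b_1\mathbf e_i+b_2\mathbf e_j+b_3\mathbf e_k): b_1,b_2,b_3\in\{-1,1\},\ 1\le i<j<k\le n\}$. To each $\mathbf v\in V$ associate a Boolean variable $x_{\mathbf v}\in\{-1,1\}$, with $x_{-\mathbf v}=-x_{\mathbf v}$. $\mathrm{NAE}(y_1,\dots,y_k)$ is satisfied iff not all $y_i$ are equal. $\mathcal C_3$ is the set of clauses $\mathrm{NAE}(x_{\mathbf v_1},x_{\mathbf v_2},x_{\mathbf v_3})$ with $\mathbf v_1=\frac{1}{\sqrt3}(s_1\mathbf e_{i_1}-s_2\mathbf e_{i_2}+s_4\mathbf e_{i_4})$, $\mathbf v_2=\frac{1}{\sqrt3}(s_2\mathbf e_{i_2}-s_3\mathbf e_{i_3}+s_5\mathbf e_{i_5})$, $\mathbf v_3=\frac{1}{\sqrt3}(s_3\mathbf e_{i_3}-s_1\mathbf e_{i_1}+s_6\mathbf e_{i_6})$ for distinct indices $i_1,\dots,i_6\in[n]$ and signs $s_1,\dots,s_6\in\{-1,1\}$. $\mathcal C_5$ is the set of clauses $\mathrm{NAE}(x_{\mathbf v_1},\dots,x_{\mathbf v_5})$ with $\mathbf v_j=\frac{1}{\sqrt3}(s_1\mathbf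 e_{i_1}+s_{2j}\mathbf e_{i_{2j}}+s_{2j+1}\mathbf e_{i_{2j+1}})$ for $j\in\{1,2,3,4\}$ and $\mathbf v_5=\frac{1}{\sqrt3}(s_{10}\mathbf e_{i_{10}}+s_{11}\mathbf e_{i_{11}}+s_{12}\mathbf e_{i_{12}})$ for distinct $i_1,\dots,i_{12}\in[n]$ and signs $s_1,\dots,s_{12}\in\{-1,1\}$. $\Phi_n$ is the instance with clause set $\mathcal C_3\cup\mathcal C_5$, each clause of $\mathcal C_3$ having weight $\frac{1-3/\sqrt{21}}{|\mathcal C_3|}$ and each clause of $\mathcal C_5$ having weight $\frac{3}{\sqrt{21}\,|\mathcal C_5|}$. *)

theory Defs
  imports Complex_Main
begin

text \<open>Vectors of R^n are represented as functions nat => real supported on the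
index set [n] = {1..n}. e_i is the i-th standard basis vector.\<close>

definition ebasis :: "nat \<Rightarrow> nat \<Rightarrow> real" where
  "ebasis i = (\<lambda>m. if m = i then 1 else 0)"

definition vec3 :: "real \<Rightarrow> nat \<Rightarrow> real \<Rightarrow> nat \<Rightarrow> real \<Rightarrow> nat \<Rightarrow> (nat \<Rightarrow> real)" where
  "vec3 a i b j c k = (\<lambda>m. (a * ebasis i m + b * ebasis j m + c * ebasis k m) / sqrt 3)"

definition Vset :: "nat \<Rightarrow> (nat \<Rightarrow> real) set" where
  "Vset n = {v. \<exists>b1 b2 b3 i j k. v = vec3 b1 i b2 j b3 k \<and>
      b1 \<in> {-1,1} \<and> b2 \<in> {-1,1} \<and> b3 \<in> {-1,1} \<and> 1 \<le> i \<and> i < j \<and> j < k \<and> k \<le> n}"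

text \<open>A clause is represented by the set of (vectors indexing) its literals.\<close>
definition C3 :: "nat \<Rightarrow> (nat \<Rightarrow> real) set set" where
  "C3 n = {C. \<exists>i1 i2 i3 i4 i5 i6 s1 s2 s3 s4 s5 s6.
      distinct [i1,i2,i3,i4,i5,i6] \<and> set [i1,i2,i3,i4,i5,i6] \<subseteq> {1..n} \<and>
      (\<forall>s\<in>set [s1,s2,s3,s4,s5,s6]. s \<in> {-1,1::real}) \<and>
      C = {vec3 s1 i1 (-s2) i2 s4 i4, vec3 s2 i2 (-s3) i3 s5 i5, vec3 s3 i3 (-s1) i1 s6 i6}}"

definition C5 :: "nat \<Rightarrow> (nat \<Rightarrow> real) set set" where
  "C5 n = {C. \<exists>i1 i2 i3 i4 i5 i6 i7 i8 i9 i10 i11 i12 s1 s2 s3 s4 s5 s6 s7 s8 s9 s10 s11 s12.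
      distinct [i1,i2,i3,i4,i5,i6,i7,i8,i9,i10,i11,i12] \<and>
      set [i1,i2,i3,i4,i5,i6,i7,i8,i9,i10,i11,i12] \<subseteq> {1..n} \<and>
      (\<forall>s\<in>set [s1,s2,s3,s4,s5,s6,s7,s8,s9,s10,s11,s12]. s \<in> {-1,1::real}) \<and>
      C = {vec3 s1 i1 s2 i2 s3 i3, vec3 s1 i1 s4 i4 s5 i5, vec3 s1 i1 s6 i6 s7 i7,
           vec3 s1 i1 s8 i8 s9 i9, vec3 s10 i10 s11 i11 s12 i12}}"

definition nae_sat :: "((nat \<Rightarrow> real) \<Rightarrow> real) \<Rightarrow> (nat \<Rightarrow> real) set \<Rightarrow> bool" where
  "nae_sat x C = (\<exists>u\<in>C. \<exists>w\<in>C. x u \<noteq> x w)"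

definition Phi_weight :: "nat \<Rightarrow> ((nat \<Rightarrow> real) \<Rightarrow> real) \<Rightarrow> real" where
  "Phi_weight n x =
     (\<Sum>C\<in>{C\<in>C3 n. nae_sat x C}. (1 - 3 / sqrt 21) / real (card (C3 n))) +
     (\<Sum>C\<in>{C\<in>C5 n. nae_sat x C}. 3 / (sqrt 21 * real (card (C5 n))))"

end

theory Submission
  imports Defs "HOL-Library.FuncSet"
begin


type_synonym lit = "real \<times> bool"

definition DD :: "lit set" where "DD = {-1,1} \<times> UNIV"

definition pr :: "real \<Rightarrow> lit \<Rightarrow> real" where
  "pr r d = (if snd d then r else 1 - r) / 2"

definition E1 :: "real \<Rightarrow> (lit \<Rightarrow> real) \<Rightarrow> real" where
  "E1 r f = (\<Sum>d\<in>DD. pr r d * f d)"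

lemma DD_eq: "DD = {(-1,False),(-1,True),(1,False),(1,True)}"
  unfolding DD_def by auto

lemma E1_expand: "E1 r f = (1-r)/2 * f (-1,False) + r/2 * f (-1,True) + (1-r)/2 * f (1,False) + r/2 * f (1,True)"
  unfolding E1_def DD_eq by (simp add: pr_def)

lemma E1_const[simp]: "E1 r (\<lambda>d. c) = c"
  unfolding E1_expand by (simp add: algebra_simps)
lemma E1_cmult[simp]: "E1 r (\<lambda>d. c * f d) = c * E1 r f"
  unfolding E1_expand by (simp add: algebra_simps)
lemma E1_multc[simp]: "E1 r (\<lambda>d. f d * c) = E1 r f * c"
  unfolding E1_expand by (simp add: algebra_simps)
lemma E1_diff[simp]: "E1 r (\<lambda>d. f d - g d) = E1 r f - E1 r g"
  unfolding E1_expand by (simp add: algebra_simps)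
lemma E1_add[simp]: "E1 r (\<lambda>d. f d + g d) = E1 r f + E1 r g"
  unfolding E1_expand by (simp add: algebra_simps)

definition flip :: "real \<Rightarrow> lit \<Rightarrow> lit" where "flip s d = (s * fst d, snd d)"

lemma E1_flip: "s \<in> {-1,1} \<Longrightarrow> E1 r (\<lambda>d. f (flip s d)) = E1 r f"
  unfolding E1_expand flip_def by (auto simp: algebra_simps)

fun Ex :: "real \<Rightarrow> nat \<Rightarrow> (lit list \<Rightarrow> real) \<Rightarrow> real" where
  "Ex r 0 h = h []"
| "Ex r (Suc k) h = E1 r (\<lambda>d. Ex r k (\<lambda>ds. h (d # ds)))"

definition W :: "real \<Rightarrow> nat set \<Rightarrow> (nat \<Rightarrow> lit) \<Rightarrow> real" where
  "W r I g = (\<Prod>i\<in>I. pr r (g i))"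

lemma sum_pr: "(\<Sum>d\<in>DD. pr r d) = 1"
  unfolding DD_eq by (simp add: pr_def)

lemma sum_W: "finite I \<Longrightarrow> (\<Sum>g\<in>PiE I (\<lambda>_. DD). W r I g) = 1"
  unfolding W_def using prod_sum_PiE[of I "\<lambda>_. DD" "\<lambda>_ d. pr r d", symmetric]
  using sum_pr[of r] by (simp add: DD_def)

lemma sum_PiE_insert:
  assumes "j \<notin> I" "finite I"
  shows "(\<Sum>g\<in>PiE (insert j I) B. F g) = (\<Sum>d\<in>B j. \<Sum>g\<in>PiE I B. F (g(j:=d)))"
proof -
  have "(\<Sum>g\<in>PiE (insert j I) B. F g) = (\<Sum>p\<in>B j \<times> PiE I B. F ((\<lambda>(y, g). g(j := y)) p))"
    unfolding PiE_insert_eq by (subst sum.reindex) (auto simp: inj_combinator assms)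
  also have "\<dots> = (\<Sum>d\<in>B j. \<Sum>g\<in>PiE I B. F (g(j:=d)))"
    by (simp add: sum.cartesian_product split_def)
  finally show ?thesis .
qed

lemma marg:
  assumes "finite I" "distinct (map fst js)" "set (map fst js) \<subseteq> I" "\<forall>p\<in>set js. snd p \<in> {-1,1}"
  shows "(\<Sum>g\<in>PiE I (\<lambda>_. DD). W r I g * h (map (\<lambda>p. flip (snd p) (g (fst p))) js)) = Ex r (length js) h"
  using assms
proof (induction js arbitrary: I h)
  case Nil
  then show ?case using sum_W[of I r] by (simp add: sum_distrib_right[symmetric])
next
  case (Cons p js)
  obtain j s where p: "p = (j,s)" by force
  define I' where "I' = I - {j}"
  have jI: "j \<in> I" and I: "I = insert j I'" and jn: "j \<notin> I'" and fI': "finite I'"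
    using Cons.prems p by (auto simp: I'_def)
  have js': "set (map fst js) \<subseteq> I'" using Cons.prems p by (auto simp: I'_def)
  have "(\<Sum>g\<in>PiE I (\<lambda>_. DD). W r I g * h (map (\<lambda>p. flip (snd p) (g (fst p))) (p#js)))
     = (\<Sum>d\<in>DD. \<Sum>g\<in>PiE I' (\<lambda>_. DD). W r (insert j I') (g(j:=d)) *
          h (flip s d # map (\<lambda>p. flip (snd p) ((g(j:=d)) (fst p))) js))"
    unfolding I p using jn fI' by (subst sum_PiE_insert) auto
  also have "\<dots> = (\<Sum>d\<in>DD. pr r d * (\<Sum>g\<in>PiE I' (\<lambda>_. DD). W r I' g *
          h (flip s d # map (\<lambda>p. flip (snd p) (g (fst p))) js)))"
  proof (intro sum.cong refl)
    fix d assume "d \<in> DD"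
    have m: "map (\<lambda>p. flip (snd p) ((g(j:=d)) (fst p))) js = map (\<lambda>p. flip (snd p) (g (fst p))) js" for g
      using Cons.prems p jn js' by (auto intro!: map_cong)
    have w: "W r (insert j I') (g(j:=d)) = pr r d * W r I' g" for g
      unfolding W_def using jn fI' by (auto intro!: prod.cong)
    show "(\<Sum>g\<in>PiE I' (\<lambda>_. DD). W r (insert j I') (g(j:=d)) *
          h (flip s d # map (\<lambda>p. flip (snd p) ((g(j:=d)) (fst p))) js)) =
         pr r d * (\<Sum>g\<in>PiE I' (\<lambda>_. DD). W r I' g * h (flip s d # map (\<lambda>p. flip (snd p) (g (fst p))) js))"
      unfolding m w by (simp add: sum_distrib_left mult.assoc)
  qed
  also have "\<dots> = (\<Sum>d\<in>DD. pr r d * Ex r (length js) (\<lambda>ds. h (flip s d # ds)))"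
    using Cons.IH[of I' "\<lambda>ds. h (flip s d # ds)" for d] Cons.prems fI' js' by auto
  also have "\<dots> = E1 r (\<lambda>d. Ex r (length js) (\<lambda>ds. h (flip s d # ds)))"
    by (simp add: E1_def)
  also have "\<dots> = E1 r (\<lambda>d. Ex r (length js) (\<lambda>ds. h (d # ds)))"
    using E1_flip[of s r "\<lambda>d. Ex r (length js) (\<lambda>ds. h (d # ds))"] Cons.prems p by auto
  finally show ?case by simp
qed



definition ind :: "bool \<Rightarrow> real" where "ind b = (if b then 1 else 0)"
definition neg :: "lit \<Rightarrow> lit" where "neg d = (- fst d, snd d)"
definition Fv :: "lit \<Rightarrow> lit \<Rightarrow> lit \<Rightarrow> real" where
  "Fv p q w = (if fst p * (if snd q \<and> snd w then -1 else 1) + fst q * (if snd p \<and> snd w then -1 else 1)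
       + fst w * (if snd p \<and> snd q then -1 else 1) > 0 then 1 else -1)"

definition h3 :: "lit list \<Rightarrow> real" where
  "h3 ys = 1 - ind (Fv (ys!0) (neg (ys!1)) (ys!3) = 1) * ind (Fv (ys!1) (neg (ys!2)) (ys!4) = 1)
     * ind (Fv (ys!2) (neg (ys!0)) (ys!5) = 1)
     - ind (Fv (ys!0) (neg (ys!1)) (ys!3) = -1) * ind (Fv (ys!1) (neg (ys!2)) (ys!4) = -1)
     * ind (Fv (ys!2) (neg (ys!0)) (ys!5) = -1)"

lemma Ex3: "Ex r 6 h3 = 15/16 - 3/4 * r^2 + 3/4 * r^4"
  apply (simp add: h3_def eval_nat_numeral)
  apply (simp add: E1_expand Fv_def neg_def ind_def)
  apply (simp add: field_simps power2_eq_square power4_eq_xxxx)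
  done

definition h5 :: "lit list \<Rightarrow> real" where
  "h5 ys = 1 - ind (Fv (ys!0) (ys!1) (ys!2) = 1) * ind (Fv (ys!0) (ys!3) (ys!4) = 1)
     * ind (Fv (ys!0) (ys!5) (ys!6) = 1) * ind (Fv (ys!0) (ys!7) (ys!8) = 1)
     * ind (Fv (ys!9) (ys!10) (ys!11) = 1)
     - ind (Fv (ys!0) (ys!1) (ys!2) = -1) * ind (Fv (ys!0) (ys!3) (ys!4) = -1)
     * ind (Fv (ys!0) (ys!5) (ys!6) = -1) * ind (Fv (ys!0) (ys!7) (ys!8) = -1)
     * ind (Fv (ys!9) (ys!10) (ys!11) = -1)"

lemma Ex5: "Ex r 12 h5 = 215/256 + 13/32 * r^2 - 15/32 * r^4 + 1/8 * r^6 - 1/16 * r^8"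
  apply (simp add: h5_def eval_nat_numeral)
  apply (simp add: E1_expand Fv_def ind_def)
  apply (simp add: field_simps power2_eq_square power4_eq_xxxx)
  done



definition supp :: "nat \<Rightarrow> (nat \<Rightarrow> real) \<Rightarrow> nat set" where
  "supp n v = {m\<in>{1..n}. v m \<noteq> 0}"

definition Sg :: "nat \<Rightarrow> (nat \<Rightarrow> lit) \<Rightarrow> (nat \<Rightarrow> real) \<Rightarrow> real" where
  "Sg n g v = (\<Sum>m\<in>supp n v. v m * fst (g m) * (if (\<forall>l\<in>supp n v - {m}. snd (g l)) then -1 else 1))"

definition xg :: "nat \<Rightarrow> (nat \<Rightarrow> lit) \<Rightarrow> (nat \<Rightarrow> real) \<Rightarrow> real" where
  "xg n g v = (if Sg n g v > 0 then 1 else -1)"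

lemma vec3_at:
  assumes "distinct [i,j,k]"
  shows "vec3 a i b j c k i = a / sqrt 3" "vec3 a i b j c k j = b / sqrt 3" "vec3 a i b j c k k = c / sqrt 3"
    "m \<notin> {i,j,k} \<Longrightarrow> vec3 a i b j c k m = 0"
  using assms by (auto simp: vec3_def ebasis_def)

lemma supp_vec3:
  assumes "distinct [i,j,k]" "{i,j,k} \<subseteq> {1..n}" "a \<noteq> 0" "b \<noteq> 0" "c \<noteq> 0"
  shows "supp n (vec3 a i b j c k) = {i,j,k}"
proof -
  have "vec3 a i b j c k m \<noteq> 0 \<longleftrightarrow> m \<in> {i,j,k}" for m
    using vec3_at(1-3)[OF assms(1), of a b c] vec3_at(4)[OF assms(1), of m a b c] assms by auto
  then show ?thesis using assms(2) unfolding supp_def by auto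
qed

lemma Sg_vec3:
  assumes "distinct [i,j,k]" "{i,j,k} \<subseteq> {1..n}" "a \<noteq> 0" "b \<noteq> 0" "c \<noteq> 0"
  shows "Sg n g (vec3 a i b j c k) =
    (a * fst (g i) * (if snd (g j) \<and> snd (g k) then -1 else 1)
   + b * fst (g j) * (if snd (g i) \<and> snd (g k) then -1 else 1)
   + c * fst (g k) * (if snd (g i) \<and> snd (g j) then -1 else 1)) / sqrt 3"
proof -
  have d: "{i,j,k} - {i} = {j,k}" "{i,j,k} - {j} = {i,k}" "{i,j,k} - {k} = {i,j}"
    using assms(1) by auto
  show ?thesis
    unfolding Sg_def supp_vec3[OF assms] using assms(1)
    by (simp add: d vec3_at[OF assms(1)] add_divide_distrib conj_commute)
qed

lemma xg_vec3:
  assumes "distinct [i,j,k]" "{i,j,k} \<subseteq> {1..n}" "a \<noteq> 0" "b \<noteq> 0" "c \<noteq> 0"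
  shows "xg n g (vec3 a i b j c k) = Fv (flip a (g i)) (flip b (g j)) (flip c (g k))"
  unfolding xg_def Sg_vec3[OF assms] Fv_def flip_def
  by (simp add: divide_pos_pos zero_less_divide_iff mult.assoc)

lemma nae3_ind:
  assumes "a \<in> {-1,1}" "b \<in> {-1,1}" "c \<in> {-1,1::real}"
  shows "(if \<not> (a = b \<and> b = c) then 1 else 0) =
    1 - ind (a = 1) * ind (b = 1) * ind (c = 1) - ind (a = -1) * ind (b = -1) * ind (c = -1)"
  using assms by (auto simp: ind_def)

lemma nae5_ind:
  assumes "a \<in> {-1,1}" "b \<in> {-1,1}" "c \<in> {-1,1::real}" "d \<in> {-1,1}" "e \<in> {-1,1::real}"
  shows "(if \<not> (a = b \<and> b = c \<and> c = d \<and> d = e) then 1 else 0) =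
    1 - ind (a = 1) * ind (b = 1) * ind (c = 1) * ind (d = 1) * ind (e = 1)
      - ind (a = -1) * ind (b = -1) * ind (c = -1) * ind (d = -1) * ind (e = -1)"
  using assms by (auto simp: ind_def)

lemma Fv_in: "Fv p q w \<in> {-1,1}" by (simp add: Fv_def)

lemma clause3:
  assumes "C \<in> C3 n"
  shows "(\<Sum>g\<in>PiE {1..n} (\<lambda>_. DD). W r {1..n} g * (if nae_sat (xg n g) C then 1 else 0)) = Ex r 6 h3"
proof -
  obtain i1 i2 i3 i4 i5 i6 s1 s2 s3 s4 s5 s6 where
    d: "distinct [i1,i2,i3,i4,i5,i6]" and sub: "set [i1,i2,i3,i4,i5,i6] \<subseteq> {1..n}" and
    s: "\<forall>s\<in>set [s1,s2,s3,s4,s5,s6]. s \<in> {-1,1::real}" and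
    C: "C = {vec3 s1 i1 (-s2) i2 s4 i4, vec3 s2 i2 (-s3) i3 s5 i5, vec3 s3 i3 (-s1) i1 s6 i6}"
    using assms unfolding C3_def by blast
  define js where "js = [(i1,s1),(i2,s2),(i3,s3),(i4,s4),(i5,s5),(i6,s6)]"
  have nz: "s1 \<noteq> 0" "s2 \<noteq> 0" "s3 \<noteq> 0" "s4 \<noteq> 0" "s5 \<noteq> 0" "s6 \<noteq> 0"
    using s by auto
  have pt: "(if nae_sat (xg n g) C then 1 else 0) = h3 (map (\<lambda>p. flip (snd p) (g (fst p))) js)" for g
  proof -
    have x1: "xg n g (vec3 s1 i1 (-s2) i2 s4 i4) = Fv (flip s1 (g i1)) (neg (flip s2 (g i2))) (flip s4 (g i4))"
      using d sub nz by (subst xg_vec3) (auto simp: flip_def neg_def)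
    have x2: "xg n g (vec3 s2 i2 (-s3) i3 s5 i5) = Fv (flip s2 (g i2)) (neg (flip s3 (g i3))) (flip s5 (g i5))"
      using d sub nz by (subst xg_vec3) (auto simp: flip_def neg_def)
    have x3: "xg n g (vec3 s3 i3 (-s1) i1 s6 i6) = Fv (flip s3 (g i3)) (neg (flip s1 (g i1))) (flip s6 (g i6))"
      using d sub nz by (subst xg_vec3) (auto simp: flip_def neg_def)
    have "nae_sat (xg n g) C \<longleftrightarrow> \<not> (xg n g (vec3 s1 i1 (-s2) i2 s4 i4) = xg n g (vec3 s2 i2 (-s3) i3 s5 i5)
        \<and> xg n g (vec3 s2 i2 (-s3) i3 s5 i5) = xg n g (vec3 s3 i3 (-s1) i1 s6 i6))"
      unfolding C nae_sat_def by auto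
    then show ?thesis unfolding x1 x2 x3 h3_def js_def
      by (simp only: nae3_ind[OF Fv_in Fv_in Fv_in]) simp
  qed
  have "(\<Sum>g\<in>PiE {1..n} (\<lambda>_. DD). W r {1..n} g * (if nae_sat (xg n g) C then 1 else 0))
      = (\<Sum>g\<in>PiE {1..n} (\<lambda>_. DD). W r {1..n} g * h3 (map (\<lambda>p. flip (snd p) (g (fst p))) js))"
    unfolding pt ..
  also have "\<dots> = Ex r (length js) h3"
    by (rule marg) (use d sub s in \<open>auto simp: js_def\<close>)
  finally show ?thesis by (simp add: js_def eval_nat_numeral)
qed

lemma clause5:
  assumes "C \<in> C5 n"
  shows "(\<Sum>g\<in>PiE {1..n} (\<lambda>_. DD). W r {1..n} g * (if nae_sat (xg n g) C then 1 else 0)) = Ex r 12 h5"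
proof -
  obtain i1 i2 i3 i4 i5 i6 i7 i8 i9 i10 i11 i12 s1 s2 s3 s4 s5 s6 s7 s8 s9 s10 s11 s12 where
    d: "distinct [i1,i2,i3,i4,i5,i6,i7,i8,i9,i10,i11,i12]" and
    sub: "set [i1,i2,i3,i4,i5,i6,i7,i8,i9,i10,i11,i12] \<subseteq> {1..n}" and
    s: "\<forall>s\<in>set [s1,s2,s3,s4,s5,s6,s7,s8,s9,s10,s11,s12]. s \<in> {-1,1::real}" and
    C: "C = {vec3 s1 i1 s2 i2 s3 i3, vec3 s1 i1 s4 i4 s5 i5, vec3 s1 i1 s6 i6 s7 i7,
           vec3 s1 i1 s8 i8 s9 i9, vec3 s10 i10 s11 i11 s12 i12}"
    using assms unfolding C5_def mem_Collect_eq apply (elim exE conjE) by (rule that)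
  define js where "js = [(i1,s1),(i2,s2),(i3,s3),(i4,s4),(i5,s5),(i6,s6),(i7,s7),(i8,s8),(i9,s9),(i10,s10),(i11,s11),(i12,s12)]"
  have sm: "\<And>x. x \<in> set [s1,s2,s3,s4,s5,s6,s7,s8,s9,s10,s11,s12] \<Longrightarrow> x \<noteq> 0"
    using s by fastforce
  have nz: "s1 \<noteq> 0" "s2 \<noteq> 0" "s3 \<noteq> 0" "s4 \<noteq> 0" "s5 \<noteq> 0" "s6 \<noteq> 0"
     "s7 \<noteq> 0" "s8 \<noteq> 0" "s9 \<noteq> 0" "s10 \<noteq> 0" "s11 \<noteq> 0" "s12 \<noteq> 0"
    by (rule sm; simp)+
  have pt: "(if nae_sat (xg n g) C then 1 else 0) = h5 (map (\<lambda>p. flip (snd p) (g (fst p))) js)" for g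
  proof -
    have x1: "xg n g (vec3 s1 i1 s2 i2 s3 i3) = Fv (flip s1 (g i1)) (flip s2 (g i2)) (flip s3 (g i3))"
      using d sub nz by (subst xg_vec3) auto
    have x2: "xg n g (vec3 s1 i1 s4 i4 s5 i5) = Fv (flip s1 (g i1)) (flip s4 (g i4)) (flip s5 (g i5))"
      using d sub nz by (subst xg_vec3) auto
    have x3: "xg n g (vec3 s1 i1 s6 i6 s7 i7) = Fv (flip s1 (g i1)) (flip s6 (g i6)) (flip s7 (g i7))"
      using d sub nz by (subst xg_vec3) auto
    have x4: "xg n g (vec3 s1 i1 s8 i8 s9 i9) = Fv (flip s1 (g i1)) (flip s8 (g i8)) (flip s9 (g i9))"
      using d sub nz by (subst xg_vec3) auto
    have x5: "xg n g (vec3 s10 i10 s11 i11 s12 i12) = Fv (flip s10 (g i10)) (flip s11 (g i11)) (flip s12 (g i12))"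
      using d sub nz by (subst xg_vec3) auto
    have "nae_sat (xg n g) C \<longleftrightarrow> \<not> (xg n g (vec3 s1 i1 s2 i2 s3 i3) = xg n g (vec3 s1 i1 s4 i4 s5 i5)
        \<and> xg n g (vec3 s1 i1 s4 i4 s5 i5) = xg n g (vec3 s1 i1 s6 i6 s7 i7)
        \<and> xg n g (vec3 s1 i1 s6 i6 s7 i7) = xg n g (vec3 s1 i1 s8 i8 s9 i9)
        \<and> xg n g (vec3 s1 i1 s8 i8 s9 i9) = xg n g (vec3 s10 i10 s11 i11 s12 i12))"
      unfolding C nae_sat_def by auto
    then show ?thesis unfolding x1 x2 x3 x4 x5 h5_def js_def
      by (simp only: nae5_ind[OF Fv_in Fv_in Fv_in Fv_in Fv_in]) simp
  qed
  have "(\<Sum>g\<in>PiE {1..n} (\<lambda>_. DD). W r {1..n} g * (if nae_sat (xg n g) C then 1 else 0))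
      = (\<Sum>g\<in>PiE {1..n} (\<lambda>_. DD). W r {1..n} g * h5 (map (\<lambda>p. flip (snd p) (g (fst p))) js))"
    unfolding pt ..
  also have "\<dots> = Ex r (length js) h5"
    by (rule marg) (use d sub s in \<open>simp_all add: js_def\<close>)
  finally show ?thesis by (simp add: js_def eval_nat_numeral)
qed



definition VV :: "nat \<Rightarrow> (nat \<Rightarrow> real) set" where
  "VV n = (\<lambda>(a,i,b,j,c,k). vec3 a i b j c k) ` ({-1,1::real} \<times> {1..n} \<times> {-1,1} \<times> {1..n} \<times> {-1,1} \<times> {1..n})"

lemma finite_VV: "finite (VV n)" unfolding VV_def by simp

lemma vec3_VV: "a \<in> {-1,1} \<Longrightarrow> b \<in> {-1,1} \<Longrightarrow> c \<in> {-1,1} \<Longrightarrow> i \<in> {1..n} \<Longrightarrow> j \<in> {1..n} \<Longrightarrow> k \<in> {1..n}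
  \<Longrightarrow> vec3 a i b j c k \<in> VV n"
  unfolding VV_def by (rule image_eqI[where x="(a,i,b,j,c,k)"]) auto

lemma neg_in: "(s::real) \<in> {-1,1} \<Longrightarrow> -s \<in> {-1,1}" by auto

lemma C3_sub: "C3 n \<subseteq> Pow (VV n)"
proof
  fix C assume "C \<in> C3 n"
  then obtain i1 i2 i3 i4 i5 i6 s1 s2 s3 s4 s5 s6 where
    d: "distinct [i1,i2,i3,i4,i5,i6]" and sub: "set [i1,i2,i3,i4,i5,i6] \<subseteq> {1..n}" and
    s: "\<forall>s\<in>set [s1,s2,s3,s4,s5,s6]. s \<in> {-1,1::real}" and
    C: "C = {vec3 s1 i1 (-s2) i2 s4 i4, vec3 s2 i2 (-s3) i3 s5 i5, vec3 s3 i3 (-s1) i1 s6 i6}"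
    unfolding C3_def mem_Collect_eq apply (elim exE conjE) by (rule that)
  have s': "s1 \<in> {-1,1}" "s2 \<in> {-1,1}" "s3 \<in> {-1,1}" "s4 \<in> {-1,1}" "s5 \<in> {-1,1}" "s6 \<in> {-1,1}"
    by (rule s[rule_format]; simp)+
  have i': "i1 \<in> {1..n}" "i2 \<in> {1..n}" "i3 \<in> {1..n}" "i4 \<in> {1..n}" "i5 \<in> {1..n}" "i6 \<in> {1..n}"
    using sub by simp_all
  show "C \<in> Pow (VV n)" unfolding C
    using vec3_VV[OF s'(1) neg_in[OF s'(2)] s'(4) i'(1,2,4)]
      vec3_VV[OF s'(2) neg_in[OF s'(3)] s'(5) i'(2,3,5)]
      vec3_VV[OF s'(3) neg_in[OF s'(1)] s'(6) i'(3,1,6)] by simp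
qed

lemma C5_sub: "C5 n \<subseteq> Pow (VV n)"
proof
  fix C assume "C \<in> C5 n"
  then obtain i1 i2 i3 i4 i5 i6 i7 i8 i9 i10 i11 i12 s1 s2 s3 s4 s5 s6 s7 s8 s9 s10 s11 s12 where
    d: "distinct [i1,i2,i3,i4,i5,i6,i7,i8,i9,i10,i11,i12]" and
    sub: "set [i1,i2,i3,i4,i5,i6,i7,i8,i9,i10,i11,i12] \<subseteq> {1..n}" and
    s: "\<forall>s\<in>set [s1,s2,s3,s4,s5,s6,s7,s8,s9,s10,s11,s12]. s \<in> {-1,1::real}" and
    C: "C = {vec3 s1 i1 s2 i2 s3 i3, vec3 s1 i1 s4 i4 s5 i5, vec3 s1 i1 s6 i6 s7 i7,
           vec3 s1 i1 s8 i8 s9 i9, vec3 s10 i10 s11 i11 s12 i12}"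
    unfolding C5_def mem_Collect_eq apply (elim exE conjE) by (rule that)
  have s': "s1 \<in> {-1,1}" "s2 \<in> {-1,1}" "s3 \<in> {-1,1}" "s4 \<in> {-1,1}" "s5 \<in> {-1,1}" "s6 \<in> {-1,1}"
     "s7 \<in> {-1,1}" "s8 \<in> {-1,1}" "s9 \<in> {-1,1}" "s10 \<in> {-1,1}" "s11 \<in> {-1,1}" "s12 \<in> {-1,1}"
    by (rule s[rule_format]; simp)+
  have i': "i1 \<in> {1..n}" "i2 \<in> {1..n}" "i3 \<in> {1..n}" "i4 \<in> {1..n}" "i5 \<in> {1..n}" "i6 \<in> {1..n}"
    "i7 \<in> {1..n}" "i8 \<in> {1..n}" "i9 \<in> {1..n}" "i10 \<in> {1..n}" "i11 \<in> {1..n}" "i12 \<in> {1..n}"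
    using sub by simp_all
  show "C \<in> Pow (VV n)" unfolding C
    using vec3_VV[OF s'(1) s'(2) s'(3) i'(1,2,3)]
      vec3_VV[OF s'(1) s'(4) s'(5) i'(1,4,5)]
      vec3_VV[OF s'(1) s'(6) s'(7) i'(1,6,7)]
      vec3_VV[OF s'(1) s'(8) s'(9) i'(1,8,9)]
      vec3_VV[OF s'(10) s'(11) s'(12) i'(10,11,12)] by simp
qed

lemma finite_C3: "finite (C3 n)"
  using C3_sub finite_VV by (meson finite_Pow_iff finite_subset)
lemma finite_C5: "finite (C5 n)"
  using C5_sub finite_VV by (meson finite_Pow_iff finite_subset)

lemma C3_ne: assumes "n \<ge> 12" shows "C3 n \<noteq> {}"
proof -
  have "{vec3 1 1 (-1) 2 1 4, vec3 1 2 (-1) 3 1 5, vec3 1 3 (-1) 1 1 6} \<in> C3 n"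
    unfolding C3_def mem_Collect_eq
    apply (rule exI[of _ 1], rule exI[of _ 2], rule exI[of _ 3], rule exI[of _ 4], rule exI[of _ 5], rule exI[of _ 6])
    apply (rule exI[of _ 1])+
    using assms by auto
  then show ?thesis by auto
qed

lemma C5_ne: assumes "n \<ge> 12" shows "C5 n \<noteq> {}"
proof -
  have "{vec3 1 1 1 2 1 3, vec3 1 1 1 4 1 5, vec3 1 1 1 6 1 7, vec3 1 1 1 8 1 9, vec3 1 10 1 11 1 12} \<in> C5 n"
    unfolding C5_def mem_Collect_eq
    apply (rule exI[of _ 1], rule exI[of _ 2], rule exI[of _ 3], rule exI[of _ 4], rule exI[of _ 5], rule exI[of _ 6])
    apply (rule exI[of _ 7], rule exI[of _ 8], rule exI[of _ 9], rule exI[of _ 10], rule exI[of _ 11], rule exI[of _ 12])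
    apply (rule exI[of _ 1])+
    using assms by auto
  then show ?thesis by auto
qed

lemma sum_total:
  assumes "n \<ge> 12"
  shows "(\<Sum>g\<in>PiE {1..n} (\<lambda>_. DD). W r {1..n} g * Phi_weight n (xg n g))
     = (1 - 3 / sqrt 21) * Ex r 6 h3 + 3 / sqrt 21 * Ex r 12 h5"
proof -
  let ?P = "PiE {1..n} (\<lambda>_. DD)"
  let ?I = "\<lambda>g C. (if nae_sat (xg n g) C then 1 else 0::real)"
  define c3 where "c3 = (1 - 3 / sqrt 21) / real (card (C3 n))"
  define c5 where "c5 = 3 / (sqrt 21 * real (card (C5 n)))"
  have pw: "Phi_weight n (xg n g) = (\<Sum>C\<in>C3 n. c3 * ?I g C) + (\<Sum>C\<in>C5 n. c5 * ?I g C)" for g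
    unfolding Phi_weight_def c3_def c5_def sum.inter_filter[OF finite_C3] sum.inter_filter[OF finite_C5]
    by (intro arg_cong2[where f="(+)"] sum.cong refl) simp_all
  have "(\<Sum>g\<in>?P. W r {1..n} g * Phi_weight n (xg n g))
      = (\<Sum>g\<in>?P. \<Sum>C\<in>C3 n. c3 * (W r {1..n} g * ?I g C)) + (\<Sum>g\<in>?P. \<Sum>C\<in>C5 n. c5 * (W r {1..n} g * ?I g C))"
    unfolding pw by (simp add: sum_distrib_left sum.distrib algebra_simps)
  also have "\<dots> = (\<Sum>C\<in>C3 n. c3 * (\<Sum>g\<in>?P. W r {1..n} g * ?I g C)) + (\<Sum>C\<in>C5 n. c5 * (\<Sum>g\<in>?P. W r {1..n} g * ?I g C))"
    apply (simp add: sum_distrib_left)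
    apply (rule arg_cong2[where f="(+)"])
    by (rule sum.swap)+
  also have "\<dots> = (\<Sum>C\<in>C3 n. c3 * Ex r 6 h3) + (\<Sum>C\<in>C5 n. c5 * Ex r 12 h5)"
    using clause3[of _ n r] clause5[of _ n r] by simp
  also have "\<dots> = (1 - 3 / sqrt 21) * Ex r 6 h3 + 3 / sqrt 21 * Ex r 12 h5"
    using C3_ne[OF assms] C5_ne[OF assms] finite_C3[of n] finite_C5[of n]
    by (simp add: c3_def c5_def card_gt_0_iff)
  finally show ?thesis .
qed

lemma pm_prod: "(a::real) \<in> {-1,1} \<Longrightarrow> x \<in> {-1,1} \<Longrightarrow> a * x * (if P then -1 else 1) \<in> {-1,1}" by auto
lemma pm_sum: "(p::real) \<in> {-1,1} \<Longrightarrow> q \<in> {-1,1} \<Longrightarrow> w \<in> {-1,1} \<Longrightarrow> p + q + w \<noteq> 0" by auto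

lemma antipodal:
  assumes g: "g \<in> PiE {1..n} (\<lambda>_. DD)" and v: "v \<in> Vset n"
  shows "xg n g (\<lambda>m. - v m) = - xg n g v"
proof -
  obtain b1 b2 b3 i j k where vv: "v = vec3 b1 i b2 j b3 k" and b: "b1 \<in> {-1,1}" "b2 \<in> {-1,1}" "b3 \<in> {-1,1}"
    and ijk: "1 \<le> i" "i < j" "j < k" "k \<le> n"
    using v unfolding Vset_def by blast
  have fs: "fst (g m) \<in> {-1,1}" if "m \<in> {1..n}" for m
    using g that unfolding DD_def by (auto dest: PiE_mem)
  have "Sg n g v \<noteq> 0"
    unfolding vv using ijk b
    apply (subst Sg_vec3)
    using ijk b apply auto[5]
    apply (simp only: divide_eq_0_iff de_Morgan_disj)
    using pm_sum[OF pm_prod[OF b(1) fs] pm_prod[OF b(2) fs] pm_prod[OF b(3) fs]] ijk by auto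
  moreover have "supp n (\<lambda>m. - v m) = supp n v" by (simp add: supp_def)
  then have "Sg n g (\<lambda>m. - v m) = - Sg n g v"
    unfolding Sg_def by (simp add: sum_negf[symmetric])
  ultimately show ?thesis unfolding xg_def by auto
qed



lemma numeric:
  "\<exists>r::real. 0 < r \<and> r < 1 \<and>
     (1 - 3 / sqrt 21) * (15/16 - 3/4 * r^2 + 3/4 * r^4) +
     3 / sqrt 21 * (215/256 + 13/32 * r^2 - 15/32 * r^4 + 1/8 * r^6 - 1/16 * r^8) = 3 * (sqrt 21 - 4) / 2"
proof -
  define s where "s = sqrt (21::real)"
  have s2: "s^2 = 21" unfolding s_def by simp
  have slo: "9/2 \<le> s"
    unfolding s_def by (rule real_le_rsqrt) (simp add: power2_eq_square)
  have shi: "s < 37/8"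
  proof -
    have "sqrt (21::real) < sqrt ((37/8)^2)" by (rule real_sqrt_less_mono) (simp add: power2_eq_square)
    then show ?thesis unfolding s_def by simp
  qed
  define w where "w = sqrt (8*s - 36)"
  have ws: "0 \<le> 8*s - 36" using slo by linarith
  have w2: "w^2 = 8*s - 36" unfolding w_def using real_sqrt_pow2[OF ws] .
  have w0: "0 \<le> w" unfolding w_def using ws by simp
  have w1: "w < 1" unfolding w_def using shi by (simp add: real_sqrt_lt_1_iff)
  define u where "u = (1 - w) / 2"
  have u0: "0 < u" "u < 1" using w0 w1 by (auto simp: u_def)
  define r where "r = sqrt u"
  have r2: "r^2 = u" unfolding r_def using u0 by simp
  have r0: "0 < r" "r < 1" unfolding r_def using u0 by (auto simp: real_sqrt_lt_1_iff)
  have r4: "r^4 = u^2" "r^6 = u^3" "r^8 = u^4"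
    unfolding r2[symmetric] by (simp_all flip: power_mult)
  have key: "(s - 3) * (15/16 - 3/4 * u + 3/4 * u^2) + 3 * (215/256 + 13/32 * u - 15/32 * u^2 + 1/8 * u^3 - 1/16 * u^4)
      = s * (3 * (s - 4) / 2)"
  proof -
    have u2: "2*u = 1 - w" unfolding u_def by simp
    have "(s - 3) * (240 - 192 * u + 192 * u^2) + 3 * (215 + 104 * u - 120 * u^2 + 32 * u^3 - 16 * u^4)
      = 128 * s * (3 * (s - 4))"
      using u2 w2 s2 by algebra
    then show ?thesis by (simp add: field_simps)
  qed
  have spos: "0 < s" using slo by simp
  have "(1 - 3 / s) * (15/16 - 3/4 * r^2 + 3/4 * r^4) +
     3 / s * (215/256 + 13/32 * r^2 - 15/32 * r^4 + 1/8 * r^6 - 1/16 * r^8) = 3 * (s - 4) / 2"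
  proof -
    have gen: "(1 - 3 / s) * A + 3 / s * B = ((s - 3) * A + 3 * B) / s" for A B
      using spos by (simp add: field_simps)
    show ?thesis unfolding r2 r4 gen key using spos by simp
  qed
  then show ?thesis using r0 unfolding s_def by blast
qed


theorem mainTheorem9:
  fixes n :: nat
  assumes "n \<ge> 12"
  shows "\<exists>x :: (nat \<Rightarrow> real) \<Rightarrow> real.
           (\<forall>v\<in>Vset n. x v \<in> {-1, 1} \<and> x (\<lambda>m. - v m) = - x v) \<and>
           Phi_weight n x \<ge> 3 * (sqrt 21 - 4) / 2"
proof -
  obtain r where r: "0 < r" "r < 1" and req: "(1 - 3 / sqrt 21) * (15/16 - 3/4 * r^2 + 3/4 * r^4) +
     3 / sqrt 21 * (215/256 + 13/32 * r^2 - 15/32 * r^4 + 1/8 * r^6 - 1/16 * r^8) = 3 * (sqrt 21 - 4) / 2"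
    using numeric by blast
  let ?P = "PiE {1..n} (\<lambda>_. DD)"
  let ?t = "3 * (sqrt 21 - 4) / 2"
  have tot: "(\<Sum>g\<in>?P. W r {1..n} g * Phi_weight n (xg n g)) = ?t"
    using sum_total[OF assms, of r] Ex3[of r] Ex5[of r] req by simp
  have "\<exists>g\<in>?P. Phi_weight n (xg n g) \<ge> ?t"
  proof (rule ccontr)
    assume "\<not> ?thesis"
    then have lt: "\<And>g. g \<in> ?P \<Longrightarrow> Phi_weight n (xg n g) < ?t" by auto
    have Wpos: "W r {1..n} g > 0" for g
      unfolding W_def pr_def using r by (intro prod_pos) auto
    have ne: "?P \<noteq> {}" by (simp add: PiE_eq_empty_iff DD_eq)
    have fin: "finite ?P" by (rule finite_PiE) (auto simp: DD_eq)
    have "(\<Sum>g\<in>?P. W r {1..n} g * Phi_weight n (xg n g)) < (\<Sum>g\<in>?P. W r {1..n} g * ?t)"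
      by (rule sum_strict_mono) (use fin ne lt Wpos in \<open>auto intro: mult_strict_left_mono\<close>)
    also have "\<dots> = (\<Sum>g\<in>?P. W r {1..n} g) * ?t" by (rule sum_distrib_right[symmetric])
    also have "\<dots> = ?t" using sum_W[of "{1..n}" r] by simp
    finally show False using tot by linarith
  qed
  then obtain g where g: "g \<in> ?P" and ge: "Phi_weight n (xg n g) \<ge> ?t" by blast
  show ?thesis
    by (rule exI[of _ "xg n g"]) (use antipodal[OF g] ge in \<open>auto simp: xg_def\<close>)
qed

end
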